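(* Let $A$ be a $*$-algebra with $*$-calculus carrying an integrable almost complex structure, $E$ a finitely generated projective holomorphic left $A$-module with holomorphic structure $\overline\partial_E$, and $\langle\,,\,\rangle:E\otimes_A\overline E\to A$ a (non-degenerate) hermitian metric. There is a unique left connection $\nabla_E$ (the Chern connection) preserving the hermitian metric with $(\pi^{0,1}\otimes\mathrm{id})\nabla_E=\overline{\partial}_E$. Writing its Christoffel matrix as $\Gamma=\Gamma_++\Gamma_-$ with $\Gamma_+\in M_n(\Omega^{1,0})$, $\Gamma_-\in M_n(\Omega^{0,1})$, the part $\Gamma_-$ is determined by $\overline\partial_E$ and $$-\Gamma_+=\partial g^\bullet\cdot g_\bullet+g^\bullet\,(\Gamma_-)^*\,g_\bullet,$$ where $(\Gamma_-)^*$ is the conjugate transpose, $((\Gamma_-)^* )_{ij}=((\Gamma_-)_{ji})^*$, and $\partial g^\bullet$ is applied entrywise.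
   Context: Integrable almost complex structure: bimodule decomposition $\Omega^n=\oplus_{p+q=n}\Omega^{p,q}$, ${\rm d}=\partial+\overline\partial$ with $\partial:\Omega^{p,q}\to\Omega^{p+1,q}$, $\overline\partial:\Omega^{p,q}\to\Omega^{p,q+1}$, $\partial^2=\overline\partial^2=0$, $\wedge$ respecting bidegree, $*$ exchanging $\Omega^{1,0},\Omega^{0,1}$, projections $\pi^{p,q}$. Holomorphic module: $\overline\partial_E:E\to\Omega^{0,1}\otimes_AE$, $\overline\partial_E(a.e)=\overline\partial a\otimes e+a.\overline\partial_Ee$, $(\overline\partial\otimes\mathrm{id}-\mathrm{id}\wedge\overline\partial_E)\overline\partial_E=0$. Matrix formalism: fix a dual basis $e^i\in E$, $e_i\in E^\circ={}_A{\rm Hom}(E,A)$, $1\le i\le n$, with $e=\sum_i e_i(e)e^i$; $P_{ji}=e_i(e^j)$, so $P^2=P$. Christoffel symbols: $\Gamma^i_k=-(\mathrm{id}\otimes{\rm ev})(\nabla_Ee^i\otimes e_k)$, so $\nabla_Ee^i=-\Gamma^i_k\otimes e^k$, and $\Gamma_{ij}=\Gamma^i_j$; these satisfy $\Gamma P=\Gamma$. Metric: $g^{ij}=\langle e^i,\overline{e^j}\rangle$; the isomorphism $G:\overline E\to E^\circ$ with $\langle,\rangle={\rm ev}(\mathrm{id}\otimes G)$ has $G(\overline{e^i})=e_jg^{ji}$ and $G^{-1}(e_i)=\overline{g_{ij}e^j}$, normalised so that $g_{ij}P_{jk}=g_{ik}$; $g^\bullet=(g^{ij})$, $g_\bullet=(g_{ij})$,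 satisfying $g^{\bullet*}=g^\bullet$, $g_\bullet^*=g_\bullet$, $g^\bullet g_\bullet=P$, $g_\bullet P=g_\bullet$, $Pg^\bullet=g^\bullet$. A connection preserves the metric if ${\rm d}\langle e,\overline f\rangle=(\mathrm{id}\otimes\langle,\rangle)(\nabla_Ee\otimes\overline f)+(\langle,\rangle\otimes\mathrm{id})(e\otimes\tilde\nabla\overline f)$ with $\tilde\nabla(\overline f)=\overline g\otimes\kappa^*$ when $\nabla_Ef=\kappa\otimes g$. *)

theory Defs
  imports Main
begin

(* Data of a *-algebra A (type 'a) with a *-differential calculus,    *)
(* truncated at degree 2: Omega^1 (type 'w) and Omega^2 (type 'v),    *)
(* together with the bidegree projections of an almost complex        *)
(* structure.                                                          *)

record ('a, 'w, 'v) calc =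
  astar :: "'a \<Rightarrow> 'a"
  lw    :: "'a \<Rightarrow> 'w \<Rightarrow> 'w"
  rw    :: "'w \<Rightarrow> 'a \<Rightarrow> 'w"
  dd    :: "'a \<Rightarrow> 'w"
  wstar :: "'w \<Rightarrow> 'w"
  lv    :: "'a \<Rightarrow> 'v \<Rightarrow> 'v"
  rv    :: "'v \<Rightarrow> 'a \<Rightarrow> 'v"
  wedge :: "'w \<Rightarrow> 'w \<Rightarrow> 'v"
  dd1   :: "'w \<Rightarrow> 'v"
  vstar :: "'v \<Rightarrow> 'v"
  p10   :: "'w \<Rightarrow> 'w"
  p01   :: "'w \<Rightarrow> 'w"
  q20   :: "'v \<Rightarrow> 'v"
  q11   :: "'v \<Rightarrow> 'v"
  q02   :: "'v \<Rightarrow> 'v"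

definition addit :: "('x::ab_group_add \<Rightarrow> 'y::ab_group_add) \<Rightarrow> bool" where
  "addit f \<longleftrightarrow> (\<forall>x y. f (x + y) = f x + f y)"

definition leftmod :: "('a::ring_1 \<Rightarrow> 'm::ab_group_add \<Rightarrow> 'm) \<Rightarrow> bool" where
  "leftmod l \<longleftrightarrow>
     (\<forall>a b x. l (a * b) x = l a (l b x)) \<and> (\<forall>x. l 1 x = x) \<and>
     (\<forall>a b x. l (a + b) x = l a x + l b x) \<and> (\<forall>a x y. l a (x + y) = l a x + l a y)"

definition bimod :: "('a::ring_1 \<Rightarrow> 'm::ab_group_add \<Rightarrow> 'm) \<Rightarrow> ('m \<Rightarrow> 'a \<Rightarrow> 'm) \<Rightarrow> bool" where
  "bimod l r \<longleftrightarrow> leftmod l \<and>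
     (\<forall>a b x. r x (a * b) = r (r x a) b) \<and> (\<forall>x. r x 1 = x) \<and>
     (\<forall>a b x. r x (a + b) = r x a + r x b) \<and> (\<forall>a x y. r (x + y) a = r x a + r y a) \<and>
     (\<forall>a x b. r (l a x) b = l a (r x b))"

definition bimod_map :: "('a::ring_1 \<Rightarrow> 'm::ab_group_add \<Rightarrow> 'm) \<Rightarrow> ('m \<Rightarrow> 'a \<Rightarrow> 'm) \<Rightarrow> ('m \<Rightarrow> 'm) \<Rightarrow> bool" where
  "bimod_map l r f \<longleftrightarrow> addit f \<and> (\<forall>a x. f (l a x) = l a (f x)) \<and> (\<forall>a x. f (r x a) = r (f x) a)"

definition star_algebra :: "('a::ring_1 \<Rightarrow> 'a) \<Rightarrow> bool" where
  "star_algebra s \<longleftrightarrow> (\<forall>a b. s (a + b) = s a + s b) \<and> (\<forall>a b. s (a * b) = s b * s a) \<and>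
     (\<forall>a. s (s a) = a)"

(* A *-algebra with *-differential calculus (degrees 0,1,2), generated in degrees 0 and 1 *)
definition star_calculus :: "('a::ring_1, 'w::ab_group_add, 'v::ab_group_add) calc \<Rightarrow> bool" where
  "star_calculus C \<longleftrightarrow>
     star_algebra (astar C) \<and> bimod (lw C) (rw C) \<and> bimod (lv C) (rv C) \<and>
     addit (dd C) \<and>
     (\<forall>a b. dd C (a * b) = rw C (dd C a) b + lw C a (dd C b)) \<and>
     (\<forall>\<xi>. \<exists>xs. \<xi> = sum_list (map (\<lambda>(a, b). lw C a (dd C b)) xs)) \<and>
     (\<forall>\<xi> \<xi>' \<eta>. wedge C (\<xi> + \<xi>') \<eta> = wedge C \<xi> \<eta> + wedge C \<xi>' \<eta>) \<and>
     (\<forall>\<xi> \<eta> \<eta>'. wedge C \<xi> (\<eta> + \<eta>') = wedge C \<xi> \<eta> + wedge C \<xi> \<eta>') \<and>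
     (\<forall>a \<xi> \<eta>. wedge C (lw C a \<xi>) \<eta> = lv C a (wedge C \<xi> \<eta>)) \<and>
     (\<forall>a \<xi> \<eta>. wedge C (rw C \<xi> a) \<eta> = wedge C \<xi> (lw C a \<eta>)) \<and>
     (\<forall>a \<xi> \<eta>. wedge C \<xi> (rw C \<eta> a) = rv C (wedge C \<xi> \<eta>) a) \<and>
     (\<forall>\<omega>. \<exists>xs. \<omega> = sum_list (map (\<lambda>(\<xi>, \<eta>). wedge C \<xi> \<eta>) xs)) \<and>
     addit (dd1 C) \<and>
     (\<forall>a. dd1 C (dd C a) = 0) \<and>
     (\<forall>a \<xi>. dd1 C (lw C a \<xi>) = wedge C (dd C a) \<xi> + lv C a (dd1 C \<xi>)) \<and>
     (\<forall>a \<xi>. dd1 C (rw C \<xi> a) = rv C (dd1 C \<xi>) a - wedge C \<xi> (dd C a)) \<and>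
     addit (wstar C) \<and> (\<forall>\<xi>. wstar C (wstar C \<xi>) = \<xi>) \<and>
     (\<forall>a \<xi>. wstar C (lw C a \<xi>) = rw C (wstar C \<xi>) (astar C a)) \<and>
     (\<forall>a \<xi>. wstar C (rw C \<xi> a) = lw C (astar C a) (wstar C \<xi>)) \<and>
     (\<forall>a. wstar C (dd C a) = dd C (astar C a)) \<and>
     addit (vstar C) \<and> (\<forall>\<omega>. vstar C (vstar C \<omega>) = \<omega>) \<and>
     (\<forall>a \<omega>. vstar C (lv C a \<omega>) = rv C (vstar C \<omega>) (astar C a)) \<and>
     (\<forall>a \<omega>. vstar C (rv C \<omega> a) = lv C (astar C a) (vstar C \<omega>)) \<and>
     (\<forall>\<xi> \<eta>. vstar C (wedge C \<xi> \<eta>) = - wedge C (wstar C \<eta>) (wstar C \<xi>)) \<and>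
     (\<forall>\<xi>. vstar C (dd1 C \<xi>) = dd1 C (wstar C \<xi>))"

(* Integrable almost complex structure: bimodule decompositions
   Omega^1 = Omega^{1,0} + Omega^{0,1}, Omega^2 = Omega^{2,0}+Omega^{1,1}+Omega^{0,2}
   via projections; wedge respects bidegree; * exchanges bidegrees;
   d = del + delbar with del of type (1,0), delbar of type (0,1);
   del^2 = delbar^2 = 0. *)
definition integrable_cplx :: "('a::ring_1, 'w::ab_group_add, 'v::ab_group_add) calc \<Rightarrow> bool" where
  "integrable_cplx C \<longleftrightarrow>
     bimod_map (lw C) (rw C) (p10 C) \<and> bimod_map (lw C) (rw C) (p01 C) \<and>
     bimod_map (lv C) (rv C) (q20 C) \<and> bimod_map (lv C) (rv C) (q11 C) \<and>
     bimod_map (lv C) (rv C) (q02 C) \<and>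
     (\<forall>\<xi>. p10 C \<xi> + p01 C \<xi> = \<xi>) \<and>
     (\<forall>\<xi>. p10 C (p10 C \<xi>) = p10 C \<xi>) \<and> (\<forall>\<xi>. p01 C (p01 C \<xi>) = p01 C \<xi>) \<and>
     (\<forall>\<xi>. p10 C (p01 C \<xi>) = 0) \<and> (\<forall>\<xi>. p01 C (p10 C \<xi>) = 0) \<and>
     (\<forall>\<omega>. q20 C \<omega> + q11 C \<omega> + q02 C \<omega> = \<omega>) \<and>
     (\<forall>\<omega>. q20 C (q20 C \<omega>) = q20 C \<omega>) \<and> (\<forall>\<omega>. q11 C (q11 C \<omega>) = q11 C \<omega>) \<and>
     (\<forall>\<omega>. q02 C (q02 C \<omega>) = q02 C \<omega>) \<and>
     (\<forall>\<omega>. q20 C (q11 C \<omega>) = 0) \<and> (\<forall>\<omega>. q20 C (q02 C \<omega>) = 0) \<and>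
     (\<forall>\<omega>. q11 C (q20 C \<omega>) = 0) \<and> (\<forall>\<omega>. q11 C (q02 C \<omega>) = 0) \<and>
     (\<forall>\<omega>. q02 C (q20 C \<omega>) = 0) \<and> (\<forall>\<omega>. q02 C (q11 C \<omega>) = 0) \<and>
     (\<forall>\<xi> \<eta>. q20 C (wedge C (p10 C \<xi>) (p10 C \<eta>)) = wedge C (p10 C \<xi>) (p10 C \<eta>)) \<and>
     (\<forall>\<xi> \<eta>. q11 C (wedge C (p10 C \<xi>) (p01 C \<eta>)) = wedge C (p10 C \<xi>) (p01 C \<eta>)) \<and>
     (\<forall>\<xi> \<eta>. q11 C (wedge C (p01 C \<xi>) (p10 C \<eta>)) = wedge C (p01 C \<xi>) (p10 C \<eta>)) \<and>
     (\<forall>\<xi> \<eta>. q02 C (wedge C (p01 C \<xi>) (p01 C \<eta>)) = wedge C (p01 C \<xi>) (p01 C \<eta>)) \<and>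
     (\<forall>\<xi>. wstar C (p10 C \<xi>) = p01 C (wstar C \<xi>)) \<and>
     (\<forall>\<omega>. vstar C (q20 C \<omega>) = q02 C (vstar C \<omega>)) \<and>
     (\<forall>\<omega>. vstar C (q11 C \<omega>) = q11 C (vstar C \<omega>)) \<and>
     (\<forall>\<xi>. q02 C (dd1 C (p10 C \<xi>)) = 0) \<and>
     (\<forall>\<xi>. q20 C (dd1 C (p01 C \<xi>)) = 0) \<and>
     (\<forall>a. q20 C (dd1 C (p10 C (dd C a))) = 0) \<and>
     (\<forall>a. q02 C (dd1 C (p01 C (dd C a))) = 0)"

definition del :: "('a, 'w, 'v) calc \<Rightarrow> 'a \<Rightarrow> 'w" where
  "del C a = p10 C (dd C a)"
definition delbar :: "('a, 'w, 'v) calc \<Rightarrow> 'a \<Rightarrow> 'w" where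
  "delbar C a = p01 C (dd C a)"
definition delbar1 :: "('a, 'w, 'v) calc \<Rightarrow> 'w \<Rightarrow> 'v" where
  "delbar1 C \<xi> = q02 C (dd1 C \<xi>)"

(* Finitely generated projective left module E (type 'e) with left    *)
(* action lE, given with a dual basis e^i = eb i, e_i = ec i, i < n:   *)
(* e = sum_i e_i(e) e^i.                                              *)

definition fgp_dual_basis ::
  "('a::ring_1 \<Rightarrow> 'e::ab_group_add \<Rightarrow> 'e) \<Rightarrow> nat \<Rightarrow> (nat \<Rightarrow> 'e) \<Rightarrow> (nat \<Rightarrow> 'e \<Rightarrow> 'a) \<Rightarrow> bool" where
  "fgp_dual_basis lE n eb ec \<longleftrightarrow> leftmod lE \<and>
     (\<forall>i. addit (ec i) \<and> (\<forall>a e. ec i (lE a e) = a * ec i e)) \<and>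
     (\<forall>e. e = (\<Sum>i<n. lE (ec i e) (eb i)))"

definition Pmat :: "(nat \<Rightarrow> 'e) \<Rightarrow> (nat \<Rightarrow> 'e \<Rightarrow> 'a) \<Rightarrow> nat \<Rightarrow> nat \<Rightarrow> 'a" where
  "Pmat eb ec j i = ec i (eb j)"

(* Omega^1 (x)_A E is identified with row vectors xi = (xi_1..xi_n) of 1-forms
   with xi P = xi, via  sum_j xi_j (x) e^j  <->  xi;
   a pure tensor kappa (x) e corresponds to (kappa . e_i(e))_i. *)
definition in_OE :: "('a::ring_1, 'w::ab_group_add, 'v) calc \<Rightarrow> nat \<Rightarrow> (nat \<Rightarrow> 'e) \<Rightarrow> (nat \<Rightarrow> 'e \<Rightarrow> 'a)
     \<Rightarrow> (nat \<Rightarrow> 'w) \<Rightarrow> bool" where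
  "in_OE C n eb ec \<xi> \<longleftrightarrow> (\<forall>j\<ge>n. \<xi> j = 0) \<and>
     (\<forall>k<n. (\<Sum>j<n. rw C (\<xi> j) (Pmat eb ec j k)) = \<xi> k)"

definition tens :: "('a, 'w::zero, 'v) calc \<Rightarrow> nat \<Rightarrow> (nat \<Rightarrow> 'e \<Rightarrow> 'a) \<Rightarrow> 'w \<Rightarrow> 'e \<Rightarrow> nat \<Rightarrow> 'w" where
  "tens C n ec \<kappa> e = (\<lambda>i. if i < n then rw C \<kappa> (ec i e) else 0)"

definition left_connection ::
  "('a::ring_1, 'w::ab_group_add, 'v) calc \<Rightarrow> ('a \<Rightarrow> 'e::ab_group_add \<Rightarrow> 'e) \<Rightarrow> nat \<Rightarrow> (nat \<Rightarrow> 'e)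
     \<Rightarrow> (nat \<Rightarrow> 'e \<Rightarrow> 'a) \<Rightarrow> ('e \<Rightarrow> nat \<Rightarrow> 'w) \<Rightarrow> bool" where
  "left_connection C lE n eb ec nab \<longleftrightarrow>
     (\<forall>e. in_OE C n eb ec (nab e)) \<and> (\<forall>e f i. nab (e + f) i = nab e i + nab f i) \<and>
     (\<forall>a e i. nab (lE a e) i = tens C n ec (dd C a) e i + lw C a (nab e i))"

(* holomorphic structure delbar_E : E -> Omega^{0,1} (x)_A E, with
   (delbar (x) id - id wedge delbar_E) delbar_E = 0 *)
definition holomorphic_structure ::
  "('a::ring_1, 'w::ab_group_add, 'v::ab_group_add) calc \<Rightarrow> ('a \<Rightarrow> 'e::ab_group_add \<Rightarrow> 'e) \<Rightarrow> nat
     \<Rightarrow> (nat \<Rightarrow> 'e) \<Rightarrow> (nat \<Rightarrow> 'e \<Rightarrow> 'a) \<Rightarrow> ('e \<Rightarrow> nat \<Rightarrow> 'w) \<Rightarrow> bool" where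
  "holomorphic_structure C lE n eb ec dbE \<longleftrightarrow>
     (\<forall>e. in_OE C n eb ec (dbE e)) \<and> (\<forall>e i. p01 C (dbE e i) = dbE e i) \<and> (\<forall>e f i. dbE (e + f) i = dbE e i + dbE f i) \<and>
     (\<forall>a e i. dbE (lE a e) i = tens C n ec (delbar C a) e i + lw C a (dbE e i)) \<and>
     (\<forall>e. \<forall>k<n. (\<Sum>j<n. rv C (delbar1 C (dbE e j)) (Pmat eb ec j k)
                        - wedge C (dbE e j) (dbE (eb j) k)) = 0)"

(* hermitian metric <e, bar f> = met e f, nondegenerate:
   G : bar E -> E^o, G(bar f) = <_, bar f>, is bijective *)
definition hermitian_metric ::
  "('a::ring_1 \<Rightarrow> 'a) \<Rightarrow> ('a \<Rightarrow> 'e::ab_group_add \<Rightarrow> 'e) \<Rightarrow> ('e \<Rightarrow> 'e \<Rightarrow> 'a) \<Rightarrow> bool" where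
  "hermitian_metric s lE met \<longleftrightarrow>
     (\<forall>e e' f. met (e + e') f = met e f + met e' f) \<and>
     (\<forall>e f f'. met e (f + f') = met e f + met e f') \<and>
     (\<forall>a e f. met (lE a e) f = a * met e f) \<and>
     (\<forall>a e f. met e (lE a f) = met e f * s a) \<and>
     (\<forall>e f. s (met e f) = met f e) \<and>
     (\<forall>\<phi>. addit \<phi> \<and> (\<forall>a e. \<phi> (lE a e) = a * \<phi> e) \<longrightarrow> (\<exists>!f. \<forall>e. met e f = \<phi> e))"

definition gup :: "(nat \<Rightarrow> 'e) \<Rightarrow> ('e \<Rightarrow> 'e \<Rightarrow> 'a) \<Rightarrow> nat \<Rightarrow> nat \<Rightarrow> 'a" where
  "gup eb met i j = met (eb i) (eb j)"

(* g_bullet: G^{-1}(e_i) = bar(sum_j g_{ij} e^j), normalised by g_{ij} P_{jk} = g_{ik} *)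
definition is_glow ::
  "('a::ring_1 \<Rightarrow> 'e::ab_group_add \<Rightarrow> 'e) \<Rightarrow> nat \<Rightarrow> (nat \<Rightarrow> 'e) \<Rightarrow> (nat \<Rightarrow> 'e \<Rightarrow> 'a) \<Rightarrow> ('e \<Rightarrow> 'e \<Rightarrow> 'a)
     \<Rightarrow> (nat \<Rightarrow> nat \<Rightarrow> 'a) \<Rightarrow> bool" where
  "is_glow lE n eb ec met gl \<longleftrightarrow>
     (\<forall>i<n. \<forall>e. met e (\<Sum>j<n. lE (gl i j) (eb j)) = ec i e) \<and>
     (\<forall>i<n. \<forall>k<n. (\<Sum>j<n. gl i j * Pmat eb ec j k) = gl i k)"

definition preserves_metric ::
  "('a::ring_1, 'w::ab_group_add, 'v) calc \<Rightarrow> nat \<Rightarrow> (nat \<Rightarrow> 'e) \<Rightarrow> ('e \<Rightarrow> 'e \<Rightarrow> 'a)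
     \<Rightarrow> ('e \<Rightarrow> nat \<Rightarrow> 'w) \<Rightarrow> bool" where
  "preserves_metric C n eb met nab \<longleftrightarrow>
     (\<forall>e f. dd C (met e f) = (\<Sum>i<n. rw C (nab e i) (met (eb i) f))
                           + (\<Sum>j<n. lw C (met e (eb j)) (wstar C (nab f j))))"

definition chern_connection ::
  "('a::ring_1, 'w::ab_group_add, 'v) calc \<Rightarrow> ('a \<Rightarrow> 'e::ab_group_add \<Rightarrow> 'e) \<Rightarrow> nat \<Rightarrow> (nat \<Rightarrow> 'e)
     \<Rightarrow> (nat \<Rightarrow> 'e \<Rightarrow> 'a) \<Rightarrow> ('e \<Rightarrow> 'e \<Rightarrow> 'a) \<Rightarrow> ('e \<Rightarrow> nat \<Rightarrow> 'w) \<Rightarrow> ('e \<Rightarrow> nat \<Rightarrow> 'w) \<Rightarrow> bool" where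
  "chern_connection C lE n eb ec met dbE nab \<longleftrightarrow>
     left_connection C lE n eb ec nab \<and> preserves_metric C n eb met nab \<and>
     (\<forall>e i. p01 C (nab e i) = dbE e i)"

(* Christoffel symbols: Gamma^i_k = -(id (x) ev)(nabla e^i (x) e_k) *)
definition christoffel :: "(nat \<Rightarrow> 'e) \<Rightarrow> ('e \<Rightarrow> nat \<Rightarrow> 'w::group_add) \<Rightarrow> nat \<Rightarrow> nat \<Rightarrow> 'w" where
  "christoffel eb nab i k = - nab (eb i) k"

end

theory Submission imports Defs begin

lemma addit_zero: "addit f \<Longrightarrow> f 0 = 0"
  unfolding addit_def by (metis add_cancel_right_right)
lemma addit_neg: "addit f \<Longrightarrow> f (- x) = - f x"
proof -
  assume a: "addit f"
  have "f (- x) + f x = f (- x + x)" using a unfolding addit_def by metis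
  also have "\<dots> = 0" using addit_zero[OF a] by simp
  finally show ?thesis by (simp add: eq_neg_iff_add_eq_0)
qed
lemma addit_diff: "addit f \<Longrightarrow> f (x - y) = f x - f y"
proof -
  assume a: "addit f"
  have "f (x - y) = f (x + - y)" by simp
  also have "\<dots> = f x + f (- y)" using a unfolding addit_def by metis
  finally show ?thesis using addit_neg[OF a, of y] by simp
qed
lemma addit_sum: "addit f \<Longrightarrow> f (\<Sum>x\<in>A. g x) = (\<Sum>x\<in>A. f (g x))"
proof (induct A rule: infinite_finite_induct)
  case (insert x F)
  then show ?case unfolding addit_def by simp
qed (simp_all add: addit_zero)

locale ctx =
  fixes C :: "('a::ring_1, 'w::ab_group_add, 'v::ab_group_add) calc"
    and lE :: "'a \<Rightarrow> 'e::ab_group_add \<Rightarrow> 'e"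
    and n :: nat and eb :: "nat \<Rightarrow> 'e" and ec :: "nat \<Rightarrow> 'e \<Rightarrow> 'a"
    and dbE :: "'e \<Rightarrow> nat \<Rightarrow> 'w" and met :: "'e \<Rightarrow> 'e \<Rightarrow> 'a"
  assumes SC: "star_calculus C"
    and IC: "integrable_cplx C"
    and FB: "fgp_dual_basis lE n eb ec"
    and HS: "holomorphic_structure C lE n eb ec dbE"
    and HM: "hermitian_metric (astar C) lE met"
begin

abbreviation "s \<equiv> astar C"
abbreviation "L \<equiv> lw C"
abbreviation "R \<equiv> rw C"
abbreviation "d \<equiv> dd C"
abbreviation "W \<equiv> wstar C"
abbreviation "p \<equiv> p10 C"
abbreviation "q \<equiv> p01 C"
abbreviation "P \<equiv> Pmat eb ec"
abbreviation "g \<equiv> gup eb met"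

lemma s_addit: "addit s" using SC unfolding star_calculus_def star_algebra_def addit_def by (elim conjE) iprover
lemma s_mult[simp]: "s (a * b) = s b * s a" using SC unfolding star_calculus_def star_algebra_def by (elim conjE) iprover
lemma s_s[simp]: "s (s a) = a" using SC unfolding star_calculus_def star_algebra_def by (elim conjE) iprover
lemma s_add[simp]: "s (a + b) = s a + s b" using s_addit unfolding addit_def by auto
lemma s_zero[simp]: "s 0 = 0" by (rule addit_zero[OF s_addit])
lemma s_neg[simp]: "s (- a) = - s a" by (rule addit_neg[OF s_addit])
lemma s_diff[simp]: "s (a - b) = s a - s b" by (rule addit_diff[OF s_addit])
lemma s_sum[simp]: "s (\<Sum>x\<in>A. f x) = (\<Sum>x\<in>A. s (f x))" by (rule addit_sum[OF s_addit])

lemma bimw: "bimod L R" using SC unfolding star_calculus_def by (elim conjE) iprover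
lemma L_addit: "addit (L a)" using bimw unfolding bimod_def leftmod_def addit_def by auto
lemma L_addit1: "addit (\<lambda>a. L a x)" using bimw unfolding bimod_def leftmod_def addit_def by auto
lemma R_addit: "addit (R x)" using bimw unfolding bimod_def leftmod_def addit_def by auto
lemma R_addit1: "addit (\<lambda>x. R x a)" using bimw unfolding bimod_def leftmod_def addit_def by auto
lemma L_mult[simp]: "L a (L b x) = L (a * b) x" using bimw unfolding bimod_def leftmod_def by auto
lemma R_mult[simp]: "R (R x a) b = R x (a * b)" using bimw unfolding bimod_def leftmod_def by auto
lemma L_one[simp]: "L 1 x = x" using bimw unfolding bimod_def leftmod_def by auto
lemma R_one[simp]: "R x 1 = x" using bimw unfolding bimod_def leftmod_def by auto
lemma RL[simp]: "R (L a x) b = L a (R x b)" using bimw unfolding bimod_def leftmod_def by auto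

lemma L_add[simp]: "L a (x + y) = L a x + L a y" "L (a + b) x = L a x + L b x"
  using L_addit L_addit1 unfolding addit_def by auto
lemma R_add[simp]: "R x (a + b) = R x a + R x b" "R (x + y) a = R x a + R y a"
  using R_addit R_addit1 unfolding addit_def by auto
lemma L_zero[simp]: "L a 0 = 0" "L 0 x = 0"
  using L_addit L_addit1 addit_zero by fastforce+
lemma R_zero[simp]: "R x 0 = 0" "R 0 a = 0"
  using R_addit R_addit1 addit_zero by fastforce+
lemma L_neg[simp]: "L a (- x) = - L a x" "L (- a) x = - L a x"
  using L_addit L_addit1 addit_neg by fastforce+
lemma R_neg[simp]: "R x (- a) = - R x a" "R (- x) a = - R x a"
  using R_addit R_addit1 addit_neg by fastforce+
lemma L_diff[simp]: "L a (x - y) = L a x - L a y" "L (a - b) x = L a x - L b x"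
  using L_addit L_addit1 addit_diff by fastforce+
lemma R_diff[simp]: "R x (a - b) = R x a - R x b" "R (x - y) a = R x a - R y a"
  using R_addit R_addit1 addit_diff by fastforce+
lemma L_sum[simp]: "L a (\<Sum>i\<in>A. f i) = (\<Sum>i\<in>A. L a (f i))" "L (\<Sum>i\<in>A. h i) x = (\<Sum>i\<in>A. L (h i) x)"
  using addit_sum[OF L_addit] addit_sum[OF L_addit1] by fastforce+
lemma R_sum[simp]: "R x (\<Sum>i\<in>A. h i) = (\<Sum>i\<in>A. R x (h i))" "R (\<Sum>i\<in>A. f i) a = (\<Sum>i\<in>A. R (f i) a)"
  using addit_sum[OF R_addit] addit_sum[OF R_addit1] by fastforce+

lemma d_addit: "addit d" using SC unfolding star_calculus_def by (elim conjE) iprover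
lemma d_add[simp]: "d (a + b) = d a + d b" using d_addit unfolding addit_def by auto
lemma d_zero[simp]: "d 0 = 0" by (rule addit_zero[OF d_addit])
lemma d_neg[simp]: "d (- a) = - d a" by (rule addit_neg[OF d_addit])
lemma d_diff[simp]: "d (a - b) = d a - d b" by (rule addit_diff[OF d_addit])
lemma d_sum[simp]: "d (\<Sum>x\<in>A. f x) = (\<Sum>x\<in>A. d (f x))" by (rule addit_sum[OF d_addit])
lemma d_mult[simp]: "d (a * b) = R (d a) b + L a (d b)" using SC unfolding star_calculus_def by (elim conjE) iprover

lemma W_addit: "addit W" using SC unfolding star_calculus_def by (elim conjE) iprover
lemma W_add[simp]: "W (a + b) = W a + W b" using W_addit unfolding addit_def by auto
lemma W_zero[simp]: "W 0 = 0" by (rule addit_zero[OF W_addit])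
lemma W_neg[simp]: "W (- a) = - W a" by (rule addit_neg[OF W_addit])
lemma W_diff[simp]: "W (a - b) = W a - W b" by (rule addit_diff[OF W_addit])
lemma W_sum[simp]: "W (\<Sum>x\<in>A. f x) = (\<Sum>x\<in>A. W (f x))" by (rule addit_sum[OF W_addit])
lemma W_W[simp]: "W (W x) = x" using SC unfolding star_calculus_def by (elim conjE) iprover
lemma W_L[simp]: "W (L a x) = R (W x) (s a)" using SC unfolding star_calculus_def by (elim conjE) iprover
lemma W_R[simp]: "W (R x a) = L (s a) (W x)" using SC unfolding star_calculus_def by (elim conjE) iprover
lemma W_d[simp]: "W (d a) = d (s a)" using SC unfolding star_calculus_def by (elim conjE) iprover

lemma p_map: "bimod_map L R p" using IC unfolding integrable_cplx_def by (elim conjE) iprover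
lemma q_map: "bimod_map L R q" using IC unfolding integrable_cplx_def by (elim conjE) iprover
lemma p_addit: "addit p" using p_map unfolding bimod_map_def by blast
lemma q_addit: "addit q" using q_map unfolding bimod_map_def by blast
lemma p_add[simp]: "p (a + b) = p a + p b" using p_addit unfolding addit_def by auto
lemma p_zero[simp]: "p 0 = 0" by (rule addit_zero[OF p_addit])
lemma p_neg[simp]: "p (- a) = - p a" by (rule addit_neg[OF p_addit])
lemma p_diff[simp]: "p (a - b) = p a - p b" by (rule addit_diff[OF p_addit])
lemma p_sum[simp]: "p (\<Sum>x\<in>A. f x) = (\<Sum>x\<in>A. p (f x))" by (rule addit_sum[OF p_addit])
lemma q_add[simp]: "q (a + b) = q a + q b" using q_addit unfolding addit_def by auto
lemma q_zero[simp]: "q 0 = 0" by (rule addit_zero[OF q_addit])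
lemma q_neg[simp]: "q (- a) = - q a" by (rule addit_neg[OF q_addit])
lemma q_diff[simp]: "q (a - b) = q a - q b" by (rule addit_diff[OF q_addit])
lemma q_sum[simp]: "q (\<Sum>x\<in>A. f x) = (\<Sum>x\<in>A. q (f x))" by (rule addit_sum[OF q_addit])
lemma p_L[simp]: "p (L a x) = L a (p x)" using p_map unfolding bimod_map_def by blast
lemma p_R[simp]: "p (R x a) = R (p x) a" using p_map unfolding bimod_map_def by blast
lemma q_L[simp]: "q (L a x) = L a (q x)" using q_map unfolding bimod_map_def by blast
lemma q_R[simp]: "q (R x a) = R (q x) a" using q_map unfolding bimod_map_def by blast
lemma pq_id: "p x + q x = x" using IC unfolding integrable_cplx_def by (elim conjE) iprover
lemma p_p[simp]: "p (p x) = p x" using IC unfolding integrable_cplx_def by (elim conjE) iprover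
lemma q_q[simp]: "q (q x) = q x" using IC unfolding integrable_cplx_def by (elim conjE) iprover
lemma p_q[simp]: "p (q x) = 0" using IC unfolding integrable_cplx_def by (elim conjE) iprover
lemma q_p[simp]: "q (p x) = 0" using IC unfolding integrable_cplx_def by (elim conjE) iprover
lemma W_p[simp]: "W (p x) = q (W x)" using IC unfolding integrable_cplx_def by (elim conjE) iprover
lemma W_q[simp]: "W (q x) = p (W x)"
proof -
  have "W (p (W x)) = q x" by simp
  then show ?thesis by (metis W_W)
qed

lemma del_eq: "del C a = p (d a)" by (simp add: del_def)
lemma delbar_eq: "delbar C a = q (d a)" by (simp add: delbar_def)

lemma lE_mod: "leftmod lE" using FB unfolding fgp_dual_basis_def by (elim conjE) iprover
lemma lE_addit: "addit (lE a)" using lE_mod unfolding leftmod_def addit_def by auto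
lemma lE_addit1: "addit (\<lambda>a. lE a x)" using lE_mod unfolding leftmod_def addit_def by auto
lemma ec_addit: "addit (ec i)" using FB unfolding fgp_dual_basis_def by (elim conjE) iprover
lemma ec_lin[simp]: "ec i (lE a e) = a * ec i e" using FB unfolding fgp_dual_basis_def by (elim conjE) iprover
lemma ec_sum[simp]: "ec i (\<Sum>x\<in>A. f x) = (\<Sum>x\<in>A. ec i (f x))" by (rule addit_sum[OF ec_addit])
lemma ec_add[simp]: "ec i (a + b) = ec i a + ec i b" using ec_addit unfolding addit_def by auto
lemma expand: "e = (\<Sum>i<n. lE (ec i e) (eb i))" using FB unfolding fgp_dual_basis_def by (elim conjE) iprover

lemma met_addl[simp]: "met (e + e') f = met e f + met e' f" using HM unfolding hermitian_metric_def by (elim conjE) iprover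
lemma met_addr[simp]: "met e (f + f') = met e f + met e f'" using HM unfolding hermitian_metric_def by (elim conjE) iprover
lemma met_linl[simp]: "met (lE a e) f = a * met e f" using HM unfolding hermitian_metric_def by (elim conjE) iprover
lemma met_linr[simp]: "met e (lE a f) = met e f * s a" using HM unfolding hermitian_metric_def by (elim conjE) iprover
lemma met_herm: "s (met e f) = met f e" using HM unfolding hermitian_metric_def by (elim conjE) iprover
lemma met_addit_l: "addit (\<lambda>e. met e f)" unfolding addit_def by simp
lemma met_addit_r: "addit (met e)" unfolding addit_def by simp
lemma met_sum_l[simp]: "met (\<Sum>x\<in>A. h x) f = (\<Sum>x\<in>A. met (h x) f)"
  using addit_sum[OF met_addit_l] by fastforce
lemma met_sum_r[simp]: "met e (\<Sum>x\<in>A. h x) = (\<Sum>x\<in>A. met e (h x))"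
  using addit_sum[OF met_addit_r] by fastforce
lemma met_nondeg0: "\<forall>\<phi>. addit \<phi> \<and> (\<forall>a e. \<phi> (lE a e) = a * \<phi> e) \<longrightarrow> (\<exists>!f. \<forall>e. met e f = \<phi> e)"
  using HM unfolding hermitian_metric_def by (elim conjE) iprover
lemma met_nondeg: "addit \<phi> \<Longrightarrow> (\<forall>a e. \<phi> (lE a e) = a * \<phi> e) \<Longrightarrow> \<exists>f. \<forall>e. met e f = \<phi> e"
  using met_nondeg0 by blast

end
context ctx begin

lemma Pmat_fold[simp]: "ec k (eb i) = P i k" by (simp add: Pmat_def)
lemma gup_fold[simp]: "met (eb i) (eb j) = g i j" by (simp add: gup_def)

lemma ec_expand: "ec k e = (\<Sum>i<n. ec i e * P i k)"
proof -
  have "ec k e = ec k (\<Sum>i<n. lE (ec i e) (eb i))" by (rule arg_cong[OF expand[of e]])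
  then show ?thesis by simp
qed

lemma PP: "(\<Sum>k<n. P i k * P k l) = P i l"
  using ec_expand[of l "eb i"] by simp

lemma met_expand_l: "met e f = (\<Sum>i<n. ec i e * met (eb i) f)"
proof -
  have "met e f = met (\<Sum>i<n. lE (ec i e) (eb i)) f" by (rule arg_cong[OF expand[of e]])
  then show ?thesis by simp
qed

lemma met_expand_r: "met e f = (\<Sum>l<n. met e (eb l) * s (ec l f))"
proof -
  have "met e f = met e (\<Sum>i<n. lE (ec i f) (eb i))" by (rule arg_cong[OF expand[of f]])
  then show ?thesis by simp
qed

lemma Pg: "(\<Sum>i<n. P j i * g i l) = g j l"
  using met_expand_l[of "eb j" "eb l"] by simp

lemma g_herm: "s (g i j) = g j i"
  using met_herm[of "eb i" "eb j"] by simp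

lemma g_Ps: "(\<Sum>j<n. g i j * s (P l j)) = g i l"
proof -
  have "s (\<Sum>j<n. g i j * s (P l j)) = (\<Sum>j<n. P l j * g j i)"
    by (simp add: g_herm)
  also have "\<dots> = g l i" by (rule Pg)
  finally have "s (s (\<Sum>j<n. g i j * s (P l j))) = s (g l i)" by simp
  then show ?thesis by (simp add: g_herm)
qed

lemma glow_ex: "\<exists>gl. is_glow lE n eb ec met gl"
proof -
  have ex: "\<forall>i. \<exists>f. \<forall>e. met e f = ec i e"
    using met_nondeg ec_addit by simp
  define F where "F i = (SOME f. \<forall>e. met e f = ec i e)" for i
  have F: "met e (F i) = ec i e" for e i
    using someI_ex[OF spec[OF ex, of i]] unfolding F_def by blast
  define gl where "gl i j = ec j (F i)" for i j
  have "is_glow lE n eb ec met gl"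
    unfolding is_glow_def
  proof (intro conjI allI impI)
    fix i e assume "i < n"
    have "met e (\<Sum>j<n. lE (gl i j) (eb j)) = met e (F i)"
      unfolding gl_def by (rule arg_cong[OF expand[of "F i", symmetric]])
    then show "met e (\<Sum>j<n. lE (gl i j) (eb j)) = ec i e" by (simp add: F)
  next
    fix i k assume "i < n" "k < n"
    show "(\<Sum>j<n. gl i j * P j k) = gl i k"
      unfolding gl_def by (rule ec_expand[symmetric])
  qed
  then show ?thesis by blast
qed

context
  fixes gl assumes GL: "is_glow lE n eb ec met gl"
begin

definition "F i = (\<Sum>j<n. lE (gl i j) (eb j))"

lemma glow1: "i < n \<Longrightarrow> met e (F i) = ec i e"
  using GL unfolding is_glow_def F_def by blast
lemma glow2: "i < n \<Longrightarrow> k < n \<Longrightarrow> (\<Sum>j<n. gl i j * P j k) = gl i k"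
  using GL unfolding is_glow_def by blast

lemma gl_ec: "i < n \<Longrightarrow> k < n \<Longrightarrow> gl i k = ec k (F i)"
  using glow2[of i k] by (simp add: F_def)

lemma gl_herm: "i < n \<Longrightarrow> k < n \<Longrightarrow> s (gl i k) = gl k i"
proof -
  assume a: "i < n" "k < n"
  have "gl k i = met (F k) (F i)" using a by (simp add: gl_ec glow1)
  moreover have "gl i k = met (F i) (F k)" using a by (simp add: gl_ec glow1)
  ultimately show ?thesis using met_herm by metis
qed

lemma g_gl: "k < n \<Longrightarrow> (\<Sum>l<n. g m l * gl l k) = P m k"
proof -
  assume a: "k < n"
  have "P m k = met (eb m) (F k)" using a by (simp add: glow1)
  also have "\<dots> = (\<Sum>l<n. g m l * s (gl k l))" by (simp add: F_def)
  also have "\<dots> = (\<Sum>l<n. g m l * gl l k)"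
    by (rule sum.cong) (simp_all add: gl_herm a)
  finally show ?thesis by simp
qed

lemma gl_g: "j < n \<Longrightarrow> (\<Sum>l<n. gl j l * g l m) = s (P m j)"
proof -
  assume a: "j < n"
  have "(\<Sum>l<n. gl j l * g l m) = met (F j) (eb m)" by (simp add: F_def)
  also have "\<dots> = s (met (eb m) (F j))" by (simp add: met_herm)
  also have "\<dots> = s (P m j)" using a by (simp add: glow1)
  finally show ?thesis .
qed

end
end
context ctx begin

lemma dbE_q: "q (dbE e i) = dbE e i" using HS unfolding holomorphic_structure_def by (elim conjE) iprover

lemma ch_conn: "chern_connection C lE n eb ec met dbE nab \<Longrightarrow> left_connection C lE n eb ec nab"
  unfolding chern_connection_def by blast
lemma ch_pm: "chern_connection C lE n eb ec met dbE nab \<Longrightarrow>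
   d (met e f) = (\<Sum>i<n. R (nab e i) (met (eb i) f)) + (\<Sum>j<n. L (met e (eb j)) (W (nab f j)))"
  unfolding chern_connection_def preserves_metric_def by blast
lemma ch_q: "chern_connection C lE n eb ec met dbE nab \<Longrightarrow> q (nab e i) = dbE e i"
  unfolding chern_connection_def by blast
lemma conn_OE1: "left_connection C lE n eb ec nab \<Longrightarrow> n \<le> j \<Longrightarrow> nab e j = 0"
  unfolding left_connection_def in_OE_def by blast
lemma conn_OE2: "left_connection C lE n eb ec nab \<Longrightarrow> k < n \<Longrightarrow> (\<Sum>j<n. R (nab e j) (P j k)) = nab e k"
  unfolding left_connection_def in_OE_def by blast

lemma ch_pW: "chern_connection C lE n eb ec met dbE nab \<Longrightarrow> p (W (nab f j)) = W (dbE f j)"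
  using ch_q[of nab f j, symmetric] by simp

lemma ch_split: "chern_connection C lE n eb ec met dbE nab \<Longrightarrow> nab e i = p (nab e i) + dbE e i"
  using pq_id[of "nab e i"] ch_q[of nab e i] by simp

context
  fixes gl assumes GL: "is_glow lE n eb ec met gl"
begin

lemma p_nab_formula:
  assumes ch: "chern_connection C lE n eb ec met dbE nab" and k: "k < n"
  shows "p (nab e k) = p (d (met e (F gl k))) - (\<Sum>j<n. L (met e (eb j)) (W (dbE (F gl k) j)))"
proof -
  have "p (d (met e (F gl k))) = (\<Sum>i<n. R (p (nab e i)) (met (eb i) (F gl k)))
        + (\<Sum>j<n. L (met e (eb j)) (W (dbE (F gl k) j)))"
    using ch_pm[OF ch, of e "F gl k"] by (simp add: ch_pW[OF ch])
  also have "(\<Sum>i<n. R (p (nab e i)) (met (eb i) (F gl k))) = (\<Sum>i<n. R (p (nab e i)) (P i k))"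
    using k by (simp add: glow1[OF GL])
  also have "\<dots> = p (nab e k)"
    using arg_cong[OF conn_OE2[OF ch_conn[OF ch] k, of e], of p] by simp
  finally show ?thesis by simp
qed

lemma chern_unique:
  assumes c1: "chern_connection C lE n eb ec met dbE nab1"
    and c2: "chern_connection C lE n eb ec met dbE nab2"
  shows "nab1 = nab2"
proof (intro ext)
  fix e k
  show "nab1 e k = nab2 e k"
  proof (cases "k < n")
    case True
    have "p (nab1 e k) = p (nab2 e k)"
      using p_nab_formula[OF c1 True] p_nab_formula[OF c2 True] by simp
    then show ?thesis using ch_split[OF c1, of e k] ch_split[OF c2, of e k] by simp
  next
    case False
    then show ?thesis using conn_OE1[OF ch_conn[OF c1]] conn_OE1[OF ch_conn[OF c2]] by simp
  qed
qed

lemma chern_formula: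
  assumes ch: "chern_connection C lE n eb ec met dbE nab" and i: "i < n" and k: "k < n"
  shows "p (nab (eb i) k) = (\<Sum>l<n. R (del C (g i l)) (gl l k))
     - (\<Sum>l<n. \<Sum>j<n. R (L (g i j) (W (dbE (eb l) j))) (gl l k))"
proof -
  have E: "del C (g i l) = (\<Sum>m<n. R (p (nab (eb i) m)) (g m l)) + (\<Sum>j<n. L (g i j) (W (dbE (eb l) j)))" for l
    using arg_cong[OF ch_pm[OF ch, of "eb i" "eb l"], of p] by (simp add: ch_pW[OF ch] del_eq)
  have "(\<Sum>l<n. R (del C (g i l)) (gl l k)) =
      (\<Sum>l<n. \<Sum>m<n. R (p (nab (eb i) m)) (g m l * gl l k)) + (\<Sum>l<n. \<Sum>j<n. R (L (g i j) (W (dbE (eb l) j))) (gl l k))"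
    by (simp add: E sum.distrib)
  also have "(\<Sum>l<n. \<Sum>m<n. R (p (nab (eb i) m)) (g m l * gl l k)) = (\<Sum>m<n. \<Sum>l<n. R (p (nab (eb i) m)) (g m l * gl l k))"
    by (rule sum.swap)
  also have "\<dots> = (\<Sum>m<n. R (p (nab (eb i) m)) (P m k))"
    by (simp add: g_gl[OF GL k, symmetric])
  also have "\<dots> = p (nab (eb i) k)"
    using arg_cong[OF conn_OE2[OF ch_conn[OF ch] k, of "eb i"], of p] by simp
  finally show ?thesis by simp
qed

end
end
context ctx begin

definition "Delta nab e f = d (met e f) - ((\<Sum>i<n. R (nab e i) (met (eb i) f)) + (\<Sum>j<n. L (met e (eb j)) (W (nab f j))))"

lemma conn_add: "left_connection C lE n eb ec nab \<Longrightarrow> nab (e + f) i = nab e i + nab f i"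
  unfolding left_connection_def by blast
lemma conn_leib: "left_connection C lE n eb ec nab \<Longrightarrow> nab (lE a e) i = tens C n ec (d a) e i + L a (nab e i)"
  unfolding left_connection_def by blast

lemma Delta_addl: "left_connection C lE n eb ec nab \<Longrightarrow> Delta nab (e + e') f = Delta nab e f + Delta nab e' f"
  unfolding Delta_def by (simp add: conn_add sum.distrib algebra_simps)
lemma Delta_addr: "left_connection C lE n eb ec nab \<Longrightarrow> Delta nab e (f + f') = Delta nab e f + Delta nab e f'"
  unfolding Delta_def by (simp add: conn_add sum.distrib algebra_simps)

lemma Delta_l:
  assumes lc: "left_connection C lE n eb ec nab"
  shows "Delta nab (lE a e) f = L a (Delta nab e f)"
proof -
  have s1: "(\<Sum>i<n. R (nab (lE a e) i) (met (eb i) f)) = R (d a) (met e f) + L a (\<Sum>i<n. R (nab e i) (met (eb i) f))"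
  proof -
    have "(\<Sum>i<n. R (nab (lE a e) i) (met (eb i) f)) = (\<Sum>i<n. R (d a) (ec i e * met (eb i) f) + L a (R (nab e i) (met (eb i) f)))"
      by (rule sum.cong) (simp_all add: conn_leib[OF lc] tens_def)
    also have "\<dots> = R (d a) (\<Sum>i<n. ec i e * met (eb i) f) + L a (\<Sum>i<n. R (nab e i) (met (eb i) f))"
      by (simp add: sum.distrib)
    also have "(\<Sum>i<n. ec i e * met (eb i) f) = met e f" by (rule met_expand_l[symmetric])
    finally show ?thesis .
  qed
  have s2: "(\<Sum>j<n. L (met (lE a e) (eb j)) (W (nab f j))) = L a (\<Sum>j<n. L (met e (eb j)) (W (nab f j)))"
    by simp
  show ?thesis unfolding Delta_def s1 s2 by (simp add: algebra_simps)
qed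

lemma Delta_r:
  assumes lc: "left_connection C lE n eb ec nab"
  shows "Delta nab e (lE a f) = R (Delta nab e f) (s a)"
proof -
  have s1: "(\<Sum>j<n. L (met e (eb j)) (W (nab (lE a f) j))) = L (met e f) (d (s a)) + R (\<Sum>j<n. L (met e (eb j)) (W (nab f j))) (s a)"
  proof -
    have "(\<Sum>j<n. L (met e (eb j)) (W (nab (lE a f) j))) = (\<Sum>j<n. L (met e (eb j) * s (ec j f)) (d (s a)) + R (L (met e (eb j)) (W (nab f j))) (s a))"
      by (rule sum.cong) (simp_all add: conn_leib[OF lc] tens_def)
    also have "\<dots> = L (\<Sum>j<n. met e (eb j) * s (ec j f)) (d (s a)) + R (\<Sum>j<n. L (met e (eb j)) (W (nab f j))) (s a)"
      by (simp add: sum.distrib)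
    also have "(\<Sum>j<n. met e (eb j) * s (ec j f)) = met e f" by (rule met_expand_r[symmetric])
    finally show ?thesis .
  qed
  have s2: "(\<Sum>i<n. R (nab e i) (met (eb i) (lE a f))) = R (\<Sum>i<n. R (nab e i) (met (eb i) f)) (s a)"
    by simp
  show ?thesis unfolding Delta_def s1 s2 by (simp add: algebra_simps)
qed

lemma Delta_reduce:
  assumes lc: "left_connection C lE n eb ec nab"
    and b: "\<And>i l. i < n \<Longrightarrow> l < n \<Longrightarrow> Delta nab (eb i) (eb l) = 0"
  shows "preserves_metric C n eb met nab"
proof -
  have al: "addit (\<lambda>e. Delta nab e f)" for f unfolding addit_def using Delta_addl[OF lc] by blast
  have ar: "addit (Delta nab e)" for e unfolding addit_def using Delta_addr[OF lc] by blast
  have r: "Delta nab (eb i) f = 0" if i: "i < n" for f i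
  proof -
    have "Delta nab (eb i) f = Delta nab (eb i) (\<Sum>l<n. lE (ec l f) (eb l))" by (rule arg_cong[OF expand[of f]])
    also have "\<dots> = (\<Sum>l<n. R (Delta nab (eb i) (eb l)) (s (ec l f)))"
      using addit_sum[OF ar, where g="\<lambda>l. lE (ec l f) (eb l)" and A="{..<n}"] by (simp add: Delta_r[OF lc])
    also have "\<dots> = 0" using b i by simp
    finally show ?thesis .
  qed
  have D0: "Delta nab e f = 0" for e f
  proof -
    have "Delta nab e f = Delta nab (\<Sum>i<n. lE (ec i e) (eb i)) f" by (rule arg_cong[OF expand[of e]])
    also have "\<dots> = (\<Sum>i<n. L (ec i e) (Delta nab (eb i) f))"
      using addit_sum[OF al, where g="\<lambda>i. lE (ec i e) (eb i)" and A="{..<n}"] by (simp add: Delta_l[OF lc])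
    also have "\<dots> = 0" using r by simp
    finally show ?thesis .
  qed
  show ?thesis unfolding preserves_metric_def
  proof (intro allI)
    fix e f show "d (met e f) = (\<Sum>i<n. R (nab e i) (met (eb i) f)) + (\<Sum>j<n. L (met e (eb j)) (W (nab f j)))"
      using D0[of e f] unfolding Delta_def by (simp only: right_minus_eq)
  qed
qed

end
context ctx begin

lemma dbE_OE1: "n \<le> j \<Longrightarrow> dbE e j = 0"
  using HS unfolding holomorphic_structure_def in_OE_def by (elim conjE) iprover
lemma dbE_OE2: "k < n \<Longrightarrow> (\<Sum>j<n. R (dbE e j) (P j k)) = dbE e k"
  using HS unfolding holomorphic_structure_def in_OE_def by (elim conjE) iprover
lemma dbE_add: "dbE (e + f) i = dbE e i + dbE f i"
  using HS unfolding holomorphic_structure_def by (elim conjE) iprover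
lemma dbE_leib: "dbE (lE a e) i = tens C n ec (delbar C a) e i + L a (dbE e i)"
  using HS unfolding holomorphic_structure_def by (elim conjE) iprover

lemma WdbE: "W (dbE e j) = p (W (dbE e j))"
proof -
  have "W (dbE e j) = W (q (dbE e j))" by (simp only: dbE_q)
  then show ?thesis by (simp only: W_q)
qed
lemma pWdbE[simp]: "p (W (dbE e j)) = W (dbE e j)"
  by (rule WdbE[symmetric])
lemma qWdbE[simp]: "q (W (dbE e j)) = 0"
proof -
  have "q (W (dbE e j)) = q (p (W (dbE e j)))" by (simp only: pWdbE)
  then show ?thesis by (simp only: q_p)
qed
lemma p_dbE[simp]: "p (dbE e j) = 0"
proof -
  have "p (dbE e j) = p (q (dbE e j))" by (simp only: dbE_q)
  then show ?thesis by simp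
qed
lemma pW: "p (W x) = W (q x)" by simp

lemma dbE_sum: "dbE (\<Sum>r\<in>A. h r) j = (\<Sum>r\<in>A. dbE (h r) j)"
proof -
  have "addit (\<lambda>e. dbE e j)" unfolding addit_def by (simp add: dbE_add)
  from addit_sum[OF this] show ?thesis .
qed

lemma W_dbE_basis:
  assumes j: "j < n"
  shows "W (dbE (eb l) j) = (\<Sum>r<n. L (s (P r j)) (p (d (s (P l r))))) + (\<Sum>r<n. R (W (dbE (eb r) j)) (s (P l r)))"
proof -
  have "dbE (eb l) j = dbE (\<Sum>r<n. lE (ec r (eb l)) (eb r)) j" by (rule arg_cong[OF expand[of "eb l"]])
  also have "\<dots> = (\<Sum>r<n. R (q (d (P l r))) (P r j) + L (P l r) (dbE (eb r) j))"
    using j by (simp add: dbE_sum dbE_leib tens_def delbar_eq)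
  finally have "W (dbE (eb l) j) = W (\<Sum>r<n. R (q (d (P l r))) (P r j) + L (P l r) (dbE (eb r) j))" by simp
  then show ?thesis by (simp add: sum.distrib)
qed

context
  fixes gl assumes GL: "is_glow lE n eb ec met gl"
begin

definition "Z i l = p (d (g i l)) - (\<Sum>j<n. L (g i j) (W (dbE (eb l) j)))"
definition "X i k = (\<Sum>l<n. R (Z i l) (gl l k))"
definition "nab0 e k = (if k < n then dbE e k + (\<Sum>i<n. R (p (d (ec i e))) (P i k)) + (\<Sum>i<n. L (ec i e) (X i k)) else 0)"

lemma qZ[simp]: "q (Z i l) = 0" unfolding Z_def by simp
lemma pZ[simp]: "p (Z i l) = Z i l" unfolding Z_def by simp
lemma qX[simp]: "q (X i k) = 0" unfolding X_def by simp
lemma pX[simp]: "p (X i k) = X i k" unfolding X_def by simp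

lemma XP: "k < n \<Longrightarrow> (\<Sum>j<n. R (X i j) (P j k)) = X i k"
proof -
  assume k: "k < n"
  have "(\<Sum>j<n. R (X i j) (P j k)) = (\<Sum>j<n. \<Sum>l<n. R (Z i l) (gl l j * P j k))"
    unfolding X_def by simp
  also have "\<dots> = (\<Sum>l<n. \<Sum>j<n. R (Z i l) (gl l j * P j k))" by (rule sum.swap)
  also have "\<dots> = (\<Sum>l<n. R (Z i l) (\<Sum>j<n. gl l j * P j k))" by simp
  also have "\<dots> = (\<Sum>l<n. R (Z i l) (gl l k))"
    by (rule sum.cong) (simp_all add: glow2[OF GL] k)
  finally show ?thesis unfolding X_def .
qed

lemma nab0_OE2: "k < n \<Longrightarrow> (\<Sum>j<n. R (nab0 e j) (P j k)) = nab0 e k"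
proof -
  assume k: "k < n"
  have "(\<Sum>j<n. R (nab0 e j) (P j k)) = (\<Sum>j<n. R (dbE e j) (P j k) + (\<Sum>i<n. R (p (d (ec i e))) (P i j * P j k))
          + (\<Sum>i<n. L (ec i e) (R (X i j) (P j k))))"
    by (rule sum.cong) (simp_all add: nab0_def)
  also have "\<dots> = (\<Sum>j<n. R (dbE e j) (P j k)) + (\<Sum>j<n. \<Sum>i<n. R (p (d (ec i e))) (P i j * P j k))
          + (\<Sum>j<n. \<Sum>i<n. L (ec i e) (R (X i j) (P j k)))" by (simp add: sum.distrib)
  also have "(\<Sum>j<n. \<Sum>i<n. R (p (d (ec i e))) (P i j * P j k)) = (\<Sum>i<n. \<Sum>j<n. R (p (d (ec i e))) (P i j * P j k))"
    by (rule sum.swap)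
  also have "\<dots> = (\<Sum>i<n. R (p (d (ec i e))) (P i k))"
    by (simp add: PP flip: R_sum)
  also have "(\<Sum>j<n. \<Sum>i<n. L (ec i e) (R (X i j) (P j k))) = (\<Sum>i<n. \<Sum>j<n. L (ec i e) (R (X i j) (P j k)))"
    by (rule sum.swap)
  also have "\<dots> = (\<Sum>i<n. L (ec i e) (X i k))"
    by (simp add: XP k flip: L_sum)
  finally show ?thesis using k by (simp add: dbE_OE2 nab0_def)
qed

lemma nab0_add: "nab0 (e + f) i = nab0 e i + nab0 f i"
  unfolding nab0_def by (simp add: dbE_add sum.distrib algebra_simps)

lemma nab0_leib: "nab0 (lE a e) i = tens C n ec (d a) e i + L a (nab0 e i)"
proof (cases "i < n")
  case True
  have "(\<Sum>r<n. R (p (d (ec r (lE a e)))) (P r i)) = R (p (d a)) (\<Sum>r<n. ec r e * P r i) + L a (\<Sum>r<n. R (p (d (ec r e))) (P r i))"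
    by (simp add: sum.distrib)
  also have "(\<Sum>r<n. ec r e * P r i) = ec i e" by (rule ec_expand[symmetric])
  finally have s1: "(\<Sum>r<n. R (p (d (ec r (lE a e)))) (P r i)) = R (p (d a)) (ec i e) + L a (\<Sum>r<n. R (p (d (ec r e))) (P r i))" .
  have dd: "R (d a) (ec i e) = R (q (d a)) (ec i e) + R (p (d a)) (ec i e)"
  proof -
    have "R (d a) (ec i e) = R (p (d a) + q (d a)) (ec i e)" by (simp only: pq_id)
    then show ?thesis by (simp only: R_add add.commute)
  qed
  show ?thesis using True unfolding nab0_def
    apply (simp only: if_True s1 dbE_leib tens_def delbar_eq)
    apply (simp add: dd algebra_simps)
    done
next
  case False
  then show ?thesis by (simp add: nab0_def tens_def)
qed

lemma nab0_q: "q (nab0 e k) = dbE e k"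
  by (simp add: nab0_def dbE_q dbE_OE1)

lemma nab0_lc: "left_connection C lE n eb ec nab0"
  unfolding left_connection_def in_OE_def
  using nab0_OE2 nab0_add nab0_leib by (simp add: nab0_def)

lemma PZ: "(\<Sum>r<n. L (P i r) (Z r l)) = Z i l - (\<Sum>r<n. R (p (d (P i r))) (g r l))"
proof -
  have a: "p (d (g i l)) = (\<Sum>r<n. R (p (d (P i r))) (g r l)) + (\<Sum>r<n. L (P i r) (p (d (g r l))))"
  proof -
    have "p (d (g i l)) = p (d (\<Sum>r<n. P i r * g r l))" by (simp add: Pg)
    then show ?thesis by (simp add: sum.distrib)
  qed
  have b: "(\<Sum>r<n. L (P i r) (\<Sum>j<n. L (g r j) (W (dbE (eb l) j)))) = (\<Sum>j<n. L (g i j) (W (dbE (eb l) j)))"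
  proof -
    have "(\<Sum>r<n. L (P i r) (\<Sum>j<n. L (g r j) (W (dbE (eb l) j)))) = (\<Sum>r<n. \<Sum>j<n. L (P i r * g r j) (W (dbE (eb l) j)))"
      by simp
    also have "\<dots> = (\<Sum>j<n. \<Sum>r<n. L (P i r * g r j) (W (dbE (eb l) j)))" by (rule sum.swap)
    also have "\<dots> = (\<Sum>j<n. L (\<Sum>r<n. P i r * g r j) (W (dbE (eb l) j)))" by simp
    also have "\<dots> = (\<Sum>j<n. L (g i j) (W (dbE (eb l) j)))" by (simp add: Pg)
    finally show ?thesis .
  qed
  have "(\<Sum>r<n. L (P i r) (Z r l)) = (\<Sum>r<n. L (P i r) (p (d (g r l)))) - (\<Sum>r<n. L (P i r) (\<Sum>j<n. L (g r j) (W (dbE (eb l) j))))"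
    unfolding Z_def by (simp only: L_diff sum_subtractf)
  also have "\<dots> = Z i l - (\<Sum>r<n. R (p (d (P i r))) (g r l))"
    unfolding b Z_def using a by (simp add: algebra_simps)
  finally show ?thesis .
qed

lemma nab0_basis: "m < n \<Longrightarrow> nab0 (eb i) m = dbE (eb i) m + X i m"
proof -
  assume m: "m < n"
  have "(\<Sum>r<n. L (P i r) (X r m)) = (\<Sum>r<n. \<Sum>l<n. L (P i r) (R (Z r l) (gl l m)))"
    unfolding X_def by simp
  also have "\<dots> = (\<Sum>l<n. \<Sum>r<n. L (P i r) (R (Z r l) (gl l m)))" by (rule sum.swap)
  also have "\<dots> = (\<Sum>l<n. R (\<Sum>r<n. L (P i r) (Z r l)) (gl l m))" by simp
  also have "\<dots> = (\<Sum>l<n. R (Z i l) (gl l m)) - (\<Sum>l<n. \<Sum>r<n. R (p (d (P i r))) (g r l * gl l m))"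
    by (simp add: PZ sum_subtractf)
  also have "(\<Sum>l<n. \<Sum>r<n. R (p (d (P i r))) (g r l * gl l m)) = (\<Sum>r<n. \<Sum>l<n. R (p (d (P i r))) (g r l * gl l m))"
    by (rule sum.swap)
  also have "\<dots> = (\<Sum>r<n. R (p (d (P i r))) (P r m))"
    by (simp add: g_gl[OF GL m] flip: R_sum)
  finally have "(\<Sum>r<n. L (P i r) (X r m)) = X i m - (\<Sum>r<n. R (p (d (P i r))) (P r m))"
    unfolding X_def .
  then show ?thesis using m unfolding nab0_def by simp
qed

end
end
context ctx begin
context
  fixes gl assumes GL: "is_glow lE n eb ec met gl"
begin

declare pX[OF GL, simp] qX[OF GL, simp] pZ[OF GL, simp] qZ[OF GL, simp]

definition "Y i l = (\<Sum>m<n. R (nab0 gl (eb i) m) (g m l)) + (\<Sum>j<n. L (g i j) (W (nab0 gl (eb l) j)))"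

lemma Y_sym: "W (Y l i) = Y i l"
  unfolding Y_def by (simp add: g_herm add.commute)

lemma pWnab0: "p (W (nab0 gl e j)) = W (dbE e j)"
proof -
  have "W (q (nab0 gl e j)) = W (dbE e j)" by (simp only: nab0_q[OF GL])
  then show ?thesis by (simp only: W_q)
qed

lemma pY: assumes i: "i < n" and l: "l < n" shows "p (Y i l) = p (d (g i l))"
proof -
  have s1: "(\<Sum>m<n. R (p (nab0 gl (eb i) m)) (g m l)) = (\<Sum>m<n. R (X gl i m) (g m l))"
    by (rule sum.cong) (simp_all add: nab0_basis[OF GL])
  have s3: "(\<Sum>m<n. R (X gl i m) (g m l)) = (\<Sum>r<n. R (Z i r) (s (P l r)))"
  proof -
    have "(\<Sum>m<n. R (X gl i m) (g m l)) = (\<Sum>m<n. \<Sum>r<n. R (Z i r) (gl r m * g m l))"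
      by (simp add: X_def[OF GL])
    also have "\<dots> = (\<Sum>r<n. \<Sum>m<n. R (Z i r) (gl r m * g m l))" by (rule sum.swap)
    also have "\<dots> = (\<Sum>r<n. R (Z i r) (\<Sum>m<n. gl r m * g m l))" by simp
    also have "\<dots> = (\<Sum>r<n. R (Z i r) (s (P l r)))"
      by (rule sum.cong) (simp_all add: gl_g[OF GL])
    finally show ?thesis .
  qed
  have A: "(\<Sum>r<n. R (p (d (g i r))) (s (P l r))) = p (d (g i l)) - (\<Sum>r<n. L (g i r) (p (d (s (P l r)))))"
  proof -
    have "p (d (g i l)) = p (d (\<Sum>r<n. g i r * s (P l r)))" by (simp only: g_Ps)
    then show ?thesis by (simp add: sum.distrib)
  qed
  have B: "(\<Sum>j<n. L (g i j) (W (dbE (eb l) j))) = (\<Sum>r<n. L (g i r) (p (d (s (P l r)))))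
           + (\<Sum>r<n. \<Sum>j<n. L (g i j) (R (W (dbE (eb r) j)) (s (P l r))))"
  proof -
    have "(\<Sum>j<n. L (g i j) (W (dbE (eb l) j))) = (\<Sum>j<n. \<Sum>r<n. L (g i j * s (P r j)) (p (d (s (P l r)))))
           + (\<Sum>j<n. \<Sum>r<n. L (g i j) (R (W (dbE (eb r) j)) (s (P l r))))"
      by (simp add: W_dbE_basis sum.distrib)
    also have "(\<Sum>j<n. \<Sum>r<n. L (g i j * s (P r j)) (p (d (s (P l r))))) = (\<Sum>r<n. \<Sum>j<n. L (g i j * s (P r j)) (p (d (s (P l r)))))"
      by (rule sum.swap)
    also have "\<dots> = (\<Sum>r<n. L (\<Sum>j<n. g i j * s (P r j)) (p (d (s (P l r)))))" by simp
    also have "\<dots> = (\<Sum>r<n. L (g i r) (p (d (s (P l r)))))" by (simp only: g_Ps)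
    also have "(\<Sum>j<n. \<Sum>r<n. L (g i j) (R (W (dbE (eb r) j)) (s (P l r)))) = (\<Sum>r<n. \<Sum>j<n. L (g i j) (R (W (dbE (eb r) j)) (s (P l r))))"
      by (rule sum.swap)
    finally show ?thesis .
  qed
  have "p (Y i l) = (\<Sum>m<n. R (p (nab0 gl (eb i) m)) (g m l)) + (\<Sum>j<n. L (g i j) (W (dbE (eb l) j)))"
    unfolding Y_def by (simp add: pWnab0)
  also have "\<dots> = (\<Sum>r<n. R (Z i r) (s (P l r))) + (\<Sum>j<n. L (g i j) (W (dbE (eb l) j)))"
    by (simp only: s1 s3)
  also have "(\<Sum>r<n. R (Z i r) (s (P l r))) = (\<Sum>r<n. R (p (d (g i r))) (s (P l r)))
       - (\<Sum>r<n. \<Sum>j<n. L (g i j) (R (W (dbE (eb r) j)) (s (P l r))))"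
    unfolding Z_def[OF GL] by (simp add: sum_subtractf)
  finally show ?thesis unfolding A B by simp
qed

lemma Y_eq: assumes i: "i < n" and l: "l < n" shows "Y i l = d (g i l)"
proof -
  have q1: "q (Y i l) = q (d (g i l))"
  proof -
    have "q (Y i l) = q (W (Y l i))" by (simp only: Y_sym)
    also have "\<dots> = W (p (Y l i))" by (simp only: W_p)
    also have "\<dots> = W (p (d (g l i)))" by (simp only: pY[OF l i])
    also have "\<dots> = q (d (g i l))" by (simp add: g_herm)
    finally show ?thesis .
  qed
  have "Y i l = p (Y i l) + q (Y i l)" by (simp only: pq_id)
  also have "\<dots> = p (d (g i l)) + q (d (g i l))" by (simp only: q1 pY[OF i l])
  also have "\<dots> = d (g i l)" by (simp only: pq_id)
  finally show ?thesis .
qed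

lemma nab0_chern: "chern_connection C lE n eb ec met dbE (nab0 gl)"
proof -
  have "preserves_metric C n eb met (nab0 gl)"
  proof (rule Delta_reduce[OF nab0_lc[OF GL]])
    fix i l assume "i < n" "l < n"
    then show "Delta (nab0 gl) (eb i) (eb l) = 0"
      using Y_eq[of i l] unfolding Delta_def Y_def by simp
  qed
  then show ?thesis unfolding chern_connection_def using nab0_lc[OF GL] nab0_q[OF GL] by blast
qed

end
end

theorem mainTheorem12:
  fixes C :: "('a::ring_1, 'w::ab_group_add, 'v::ab_group_add) calc"
    and lE :: "'a \<Rightarrow> 'e::ab_group_add \<Rightarrow> 'e"
    and n :: nat and eb :: "nat \<Rightarrow> 'e" and ec :: "nat \<Rightarrow> 'e \<Rightarrow> 'a"
    and dbE :: "'e \<Rightarrow> nat \<Rightarrow> 'w" and met :: "'e \<Rightarrow> 'e \<Rightarrow> 'a"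
  assumes "star_calculus C"
    and "integrable_cplx C"
    and "fgp_dual_basis lE n eb ec"
    and "holomorphic_structure C lE n eb ec dbE"
    and "hermitian_metric (astar C) lE met"
  shows "(\<exists>!nab. chern_connection C lE n eb ec met dbE nab) \<and>
    (\<forall>nab. chern_connection C lE n eb ec met dbE nab \<longrightarrow>
      (\<forall>i<n. \<forall>k<n. p01 C (christoffel eb nab i k) = - dbE (eb i) k) \<and>
      (\<forall>gl. is_glow lE n eb ec met gl \<longrightarrow>
         (\<forall>i<n. \<forall>k<n.
            - p10 C (christoffel eb nab i k) =
              (\<Sum>j<n. rw C (del C (gup eb met i j)) (gl j k))
              + (\<Sum>j<n. \<Sum>l<n. rw C (lw C (gup eb met i j)
                                          (wstar C (p01 C (christoffel eb nab l j)))) (gl l k)))))"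
proof -
  interpret ctx C lE n eb ec dbE met using assms by unfold_locales
  obtain gl0 where G0: "is_glow lE n eb ec met gl0" using glow_ex by blast
  have ex1: "\<exists>!nab. chern_connection C lE n eb ec met dbE nab"
  proof (rule ex1I)
    show "chern_connection C lE n eb ec met dbE (nab0 gl0)" by (rule nab0_chern[OF G0])
  next
    fix nab assume "chern_connection C lE n eb ec met dbE nab"
    then show "nab = nab0 gl0" using chern_unique[OF G0] nab0_chern[OF G0] by blast
  qed
  have rest: "(\<forall>i<n. \<forall>k<n. p01 C (christoffel eb nab i k) = - dbE (eb i) k) \<and>
      (\<forall>gl. is_glow lE n eb ec met gl \<longrightarrow>
         (\<forall>i<n. \<forall>k<n.
            - p10 C (christoffel eb nab i k) =
              (\<Sum>j<n. rw C (del C (gup eb met i j)) (gl j k))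
              + (\<Sum>j<n. \<Sum>l<n. rw C (lw C (gup eb met i j)
                                          (wstar C (p01 C (christoffel eb nab l j)))) (gl l k))))"
    if ch: "chern_connection C lE n eb ec met dbE nab" for nab
  proof (intro conjI allI impI)
    fix i k assume "i < n" "k < n"
    show "p01 C (christoffel eb nab i k) = - dbE (eb i) k"
      unfolding christoffel_def by (simp add: ch_q[OF ch])
  next
    fix gl i k assume GL: "is_glow lE n eb ec met gl" and i: "i < n" and k: "k < n"
    have sw: "(\<Sum>j<n. \<Sum>l<n. R (L (g i j) (W (dbE (eb l) j))) (gl l k)) = (\<Sum>l<n. \<Sum>j<n. R (L (g i j) (W (dbE (eb l) j))) (gl l k))"
      by (rule sum.swap)
    have "- p (christoffel eb nab i k) = p (nab (eb i) k)" unfolding christoffel_def by simp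
    also have "\<dots> = (\<Sum>l<n. R (del C (g i l)) (gl l k)) - (\<Sum>l<n. \<Sum>j<n. R (L (g i j) (W (dbE (eb l) j))) (gl l k))"
      by (rule chern_formula[OF GL ch i k])
    also have "\<dots> = (\<Sum>j<n. R (del C (g i j)) (gl j k)) + (\<Sum>j<n. \<Sum>l<n. R (L (g i j) (W (q (christoffel eb nab l j)))) (gl l k))"
      unfolding christoffel_def by (simp add: ch_q[OF ch] sum_negf) (rule sum.swap)
    finally show "- p (christoffel eb nab i k) = (\<Sum>j<n. R (del C (g i j)) (gl j k)) + (\<Sum>j<n. \<Sum>l<n. R (L (g i j) (W (q (christoffel eb nab l j)))) (gl l k))" .
  qed
  show ?thesis using ex1 rest by blast
qed

end
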